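(* The module $\varphi(M_{s,\ell})$ is generated as an $\mathbb F_q[X]$-module by the $\ell+1$ polynomials $\bar P^{(t)}(X,Y)=\bar G(X)^{s-t}(Y-\bar R(X))^t$ for $0\le t<s$ and $\bar P^{(t)}(X,Y)=(L(X)Y)^{t-s}(Y-\bar R(X))^s$ for $s\le t\le\ell$.
   Context: Let $\mathbb F_q$ be a finite field, $1\le k<n<q$, $\alpha_0,\dots,\alpha_{n-1}$ distinct nonzero elements of $\mathbb F_q$, $w_0,\dots,w_{n-1}$ nonzero elements of $\mathbb F_q$, and $r\in\mathbb F_q^n$ a word with $r_i=0$ for $i=0,\dots,k-1$; let $r_i'=r_i/w_i$. Let $G(X)=\prod_{i=0}^{n-1}(X-\alpha_i)$, $R(X)$ the unique polynomial of degree $<n$ with $R(\alpha_i)=r_i'$, $L(X)=\prod_{i=0}^{k-1}(X-\alpha_i)$, $\bar G=G/L$ and $\bar R=R/L$ (both polynomials). For positive integers $s\le\ell$, $M_{s,\ell}$ is the $\mathbb F_q[X]$-module of all $Q\in\mathbb F_q[X,Y]$ of $Y$-degree at most $\ell$ such that for each $i$, $Q(X+\alpha_i,Y+r_i')$ has no monomials of total degree less than $s$. Define $\varphi(Q)(X,Y)=L(X)^{-s}Q(X,L(X)Y)$ for $Q\in M_{s,\ell}$ (this lies in $\mathbb F_q[X,Y]$), and let $\varphi(M_{s,\ell})$ be the image. *)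

theory Defs
  imports "HOL-Computational_Algebra.Polynomial"
begin

text \<open>Bivariate polynomials in X and Y are represented as elements of type
  'a poly poly: polynomials in Y whose coefficients are polynomials in X.
  Thus coeff (coeff Q j) i is the coefficient of X^i Y^j.\<close>

definition shiftXY :: "'a::comm_ring_1 poly poly \<Rightarrow> 'a \<Rightarrow> 'a \<Rightarrow> 'a poly poly" where
  "shiftXY Q a b = map_poly (\<lambda>c. pcompose c [:a, 1:]) (pcompose Q [:[:b:], 1:])"
  \<comment> \<open>Q(X + a, Y + b)\<close>

definition no_low_monomials :: "nat \<Rightarrow> 'a::zero poly poly \<Rightarrow> bool" where
  "no_low_monomials s P \<longleftrightarrow> (\<forall>i j. i + j < s \<longrightarrow> coeff (coeff P j) i = 0)"

definition Mmod :: "nat \<Rightarrow> nat \<Rightarrow> nat \<Rightarrow> (nat \<Rightarrow> 'a::comm_ring_1) \<Rightarrow> (nat \<Rightarrow> 'a) \<Rightarrow> 'a poly poly set" where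
  "Mmod s l n alpha r' = {Q. degree Q \<le> l \<and>
      (\<forall>i<n. no_low_monomials s (shiftXY Q (alpha i) (r' i)))}"

definition phi :: "nat \<Rightarrow> 'a::field poly \<Rightarrow> 'a poly poly \<Rightarrow> 'a poly poly" where
  "phi s L Q = map_poly (\<lambda>c. c div L ^ s) (pcompose Q [:0, L:])"
  \<comment> \<open>L(X)^{-s} Q(X, L(X) Y)\<close>

end

theory Submission
  imports Defs
begin


abbreviation nlm where "nlm \<equiv> no_low_monomials"

lemma nlm_0[simp]: "nlm 0 P" by (simp add: no_low_monomials_def)

lemma nlm_zero[simp]: "nlm s 0" by (simp add: no_low_monomials_def)

lemma nlm_mono: "nlm a P \<Longrightarrow> b \<le> a \<Longrightarrow> nlm b P"
  by (auto simp: no_low_monomials_def)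

lemma nlm_add: "nlm s P \<Longrightarrow> nlm s Q \<Longrightarrow> nlm s (P + Q)"
  by (auto simp: no_low_monomials_def)

lemma nlm_sum: "finite A \<Longrightarrow> (\<And>x. x \<in> A \<Longrightarrow> nlm s (f x)) \<Longrightarrow> nlm s (sum f A)"
  by (induction A rule: finite_induct) (auto intro: nlm_add)

lemma nlm_mult:
  fixes P Q :: "'a::comm_ring_1 poly poly"
  assumes "nlm a P" "nlm b Q" shows "nlm (a + b) (P * Q)"
  unfolding no_low_monomials_def
proof (intro allI impI)
  fix i j assume ij: "i + j < a + b"
  have "coeff (coeff (P * Q) j) i = (\<Sum>u\<le>j. coeff (coeff P u * coeff Q (j - u)) i)"
    by (simp add: coeff_mult coeff_sum)
  also have "\<dots> = (\<Sum>u\<le>j. \<Sum>v\<le>i. coeff (coeff P u) v * coeff (coeff Q (j - u)) (i - v))"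
    by (simp add: coeff_mult)
  also have "\<dots> = 0"
  proof (intro sum.neutral ballI)
    fix u v assume "u \<in> {..j}" "v \<in> {..i}"
    then have "v + u < a \<or> (i - v) + (j - u) < b" using ij by auto
    then show "coeff (coeff P u) v * coeff (coeff Q (j - u)) (i - v) = 0"
      using assms by (auto simp: no_low_monomials_def)
  qed
  finally show "coeff (coeff (P * Q) j) i = 0" .
qed

lemma nlm_power:
  fixes P :: "'a::comm_ring_1 poly poly"
  shows "nlm a P \<Longrightarrow> nlm (a * m) (P ^ m)"
proof (induction m)
  case 0 then show ?case by simp
next
  case (Suc m)
  then have "nlm (a + a * m) (P * P ^ m)" using nlm_mult by blast
  then show ?case by (simp add: algebra_simps)
qed

lemma nlm_const: "monom 1 a dvd c \<Longrightarrow> nlm a [:c:]"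
  by (auto simp: no_low_monomials_def monom_1_dvd_iff' coeff_pCons split: nat.splits)

lemma nlm_coeff: "nlm s P \<Longrightarrow> j < s \<Longrightarrow> monom 1 (s - j) dvd coeff P j"
  by (auto simp: no_low_monomials_def monom_1_dvd_iff')

lemma smult_as_mult: "smult c P = [:c:] * P" by simp

lemma nlm_smult: "nlm s P \<Longrightarrow> nlm s (smult (c::'a::comm_ring_1 poly) P)"
  using nlm_mult[of 0 "[:c:]" s P] by (simp add: no_low_monomials_def)

lemma nlm_lin: "coeff S 0 = 0 \<Longrightarrow> nlm 1 [:S, 1:]"
  by (auto simp: no_low_monomials_def)

lemma nlm_pCons: "nlm s (pCons a P) \<Longrightarrow> nlm (s - 1) P \<and> nlm s [:a:]"
  unfolding no_low_monomials_def
proof (intro conjI allI impI)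
  fix i j assume *: "\<forall>i j. i + j < s \<longrightarrow> coeff (coeff (pCons a P) j) i = 0"
  { assume "i + j < s - 1"
    then have "i + Suc j < s" by linarith
    with * show "coeff (coeff P j) i = 0" by (metis coeff_pCons_Suc) }
  { assume "i + j < s"
    with * show "coeff (coeff [:a:] j) i = 0"
      using *[rule_format, of i 0] by (cases j) auto }
qed

lemma nlm_comp:
  fixes P :: "'a::comm_ring_1 poly poly"
  assumes "coeff S 0 = 0"
  shows "nlm s P \<Longrightarrow> nlm s (P \<circ>\<^sub>p [:S, 1:])"
proof (induction P arbitrary: s)
  case 0 then show ?case by (simp add: no_low_monomials_def)
next
  case (pCons a P)
  from nlm_pCons[OF pCons.prems] have h: "nlm (s - 1) P" "nlm s [:a:]" by auto
  have "nlm (1 + (s - 1)) ([:S, 1:] * (P \<circ>\<^sub>p [:S, 1:]))"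
    by (rule nlm_mult[OF nlm_lin[OF assms] pCons.IH[OF h(1)]])
  then have "nlm s ([:S, 1:] * (P \<circ>\<^sub>p [:S, 1:]))" by (rule nlm_mono) simp
  then show ?case by (simp add: pcompose_pCons nlm_add h(2))
qed



definition rhom :: "('a::comm_ring_1 \<Rightarrow> 'b::comm_ring_1) \<Rightarrow> bool" where
  "rhom f \<longleftrightarrow> f 0 = 0 \<and> f 1 = 1 \<and> (\<forall>x y. f (x + y) = f x + f y) \<and> (\<forall>x y. f (x * y) = f x * f y)"

lemma map_poly_add_h: "rhom f \<Longrightarrow> map_poly f (p + q) = map_poly f p + map_poly f q"
  by (intro poly_eqI) (simp add: coeff_map_poly rhom_def)

lemma map_poly_smult_h: "rhom f \<Longrightarrow> map_poly f (smult c p) = smult (f c) (map_poly f p)"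
  by (rule map_poly_smult) (auto simp: rhom_def)

lemma map_poly_const_h: "rhom f \<Longrightarrow> map_poly f [:c:] = [:f c:]"
  by (simp add: map_poly_pCons rhom_def)

lemma map_poly_mult_h: "rhom f \<Longrightarrow> map_poly f (p * q) = map_poly f p * map_poly f q"
proof (induction p)
  case 0 then show ?case by simp
next
  case (pCons a p)
  have "map_poly f (pCons a p * q) = map_poly f (smult a q + pCons 0 (p * q))" by simp
  also have "\<dots> = smult (f a) (map_poly f q) + pCons 0 (map_poly f p * map_poly f q)"
    using pCons by (simp add: map_poly_add_h map_poly_smult_h map_poly_pCons rhom_def)
  also have "\<dots> = pCons (f a) (map_poly f p) * map_poly f q" by simp
  also have "\<dots> = map_poly f (pCons a p) * map_poly f q"
    using pCons.prems by (simp add: map_poly_pCons rhom_def)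
  finally show ?case .
qed

lemma map_poly_one_h: "rhom f \<Longrightarrow> map_poly f 1 = 1"
  by (simp add: rhom_def)

lemma map_poly_power_h: "rhom f \<Longrightarrow> map_poly f (p ^ n) = map_poly f p ^ n"
  by (induction n) (simp_all add: map_poly_one_h map_poly_mult_h)

lemma map_poly_sum_h: "rhom f \<Longrightarrow> map_poly f (sum g A) = (\<Sum>x\<in>A. map_poly f (g x))"
  by (induction A rule: infinite_finite_induct) (simp_all add: map_poly_add_h)

lemma map_poly_pcompose_h: "rhom f \<Longrightarrow> map_poly f (p \<circ>\<^sub>p q) = map_poly f p \<circ>\<^sub>p map_poly f q"
proof (induction p)
  case 0 then show ?case by simp
next
  case (pCons a p)
  then show ?case
    by (simp add: pcompose_pCons map_poly_add_h map_poly_mult_h map_poly_const_h map_poly_pCons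
        rhom_def)
qed

lemma rhom_pcomp: "rhom (\<lambda>c. c \<circ>\<^sub>p r)"
  by (simp add: rhom_def pcompose_add pcompose_mult pcompose_1)

lemma pcompose_power: "(p ^ n) \<circ>\<^sub>p q = (p \<circ>\<^sub>p q) ^ n"
  by (induction n) (simp_all add: pcompose_1 pcompose_mult)

lemma pcompose_as_sum: "p \<circ>\<^sub>p q = (\<Sum>j\<le>degree p. smult (coeff p j) (q ^ j))"
proof -
  have d: "degree (map_poly (\<lambda>x. [:x:]) p) = degree p"
    by (rule degree_map_poly) simp
  show ?thesis
    unfolding pcompose_altdef poly_altdef d
    by (intro sum.cong refl) (simp add: coeff_map_poly)
qed

lemma dvd_pcompose: "p dvd q \<Longrightarrow> p \<circ>\<^sub>p r dvd q \<circ>\<^sub>p r"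
  by (auto simp: pcompose_mult elim!: dvdE)

lemma lin_shift_dvd:
  fixes c :: "'a::field poly"
  shows "monom 1 m dvd c \<circ>\<^sub>p [:a, 1:] \<longleftrightarrow> [:-a, 1:] ^ m dvd c"
proof
  assume "monom 1 m dvd c \<circ>\<^sub>p [:a, 1:]"
  then have "monom 1 m \<circ>\<^sub>p [:-a, 1:] dvd (c \<circ>\<^sub>p [:a, 1:]) \<circ>\<^sub>p [:-a, 1:]"
    by (rule dvd_pcompose)
  moreover have "(c \<circ>\<^sub>p [:a, 1:]) \<circ>\<^sub>p [:-a, 1:] = c"
    by (simp add: pcompose_assoc[symmetric] pcompose_pCons)
  moreover have "monom 1 m \<circ>\<^sub>p [:-a, 1:] = [:-a, 1:] ^ m"
    by (simp add: monom_altdef pcompose_power pcompose_pCons)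
  ultimately show "[:-a, 1:] ^ m dvd c" by simp
next
  assume "[:-a, 1:] ^ m dvd c"
  then have "[:-a, 1:] ^ m \<circ>\<^sub>p [:a, 1:] dvd c \<circ>\<^sub>p [:a, 1:]"
    by (rule dvd_pcompose)
  moreover have "[:-a, 1:] ^ m \<circ>\<^sub>p [:a, 1:] = monom 1 m"
    by (simp add: monom_altdef pcompose_power pcompose_pCons)
  ultimately show "monom 1 m dvd c \<circ>\<^sub>p [:a, 1:]" by simp
qed



lemma shift_equiv:
  fixes Q :: "'a::field poly poly" and R :: "'a poly"
  assumes "poly R a = b"
  shows "nlm s (shiftXY Q a b) \<longleftrightarrow> nlm s (map_poly (\<lambda>c. c \<circ>\<^sub>p [:a, 1:]) (Q \<circ>\<^sub>p [:R, 1:]))"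
proof -
  define h where "h = (\<lambda>c::'a poly. c \<circ>\<^sub>p [:a, 1:])"
  have hh: "rhom h" unfolding h_def by (rule rhom_pcomp)
  define T where "T = Q \<circ>\<^sub>p [:R, 1:]"
  define U where "U = map_poly h T"
  define S where "S = [:b:] - h R"
  have QT: "Q = T \<circ>\<^sub>p [:-R, 1:]"
    unfolding T_def by (simp add: pcompose_assoc[symmetric] pcompose_pCons)
  have "shiftXY Q a b = map_poly h (T \<circ>\<^sub>p ([:-R, 1:] \<circ>\<^sub>p [:[:b:], 1:]))"
    unfolding shiftXY_def h_def[symmetric] QT by (simp add: pcompose_assoc)
  also have "[:-R, 1:] \<circ>\<^sub>p [:[:b:], 1:] = [:[:b:] - R, 1:]"
    by (simp add: pcompose_pCons)
  also have "map_poly h (T \<circ>\<^sub>p [:[:b:] - R, 1:]) = U \<circ>\<^sub>p [:S, 1:]"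
    unfolding U_def S_def using hh
    by (simp add: map_poly_pcompose_h map_poly_pCons rhom_def h_def pcompose_diff)
  finally have sh: "shiftXY Q a b = U \<circ>\<^sub>p [:S, 1:]" .
  have S0: "coeff S 0 = 0"
    using assms by (simp add: S_def h_def poly_0_coeff_0[symmetric] poly_pcompose)
  then have S0': "coeff (-S) 0 = 0" by simp
  have UU: "U = (U \<circ>\<^sub>p [:S, 1:]) \<circ>\<^sub>p [:-S, 1:]"
    by (simp add: pcompose_assoc[symmetric] pcompose_pCons)
  show ?thesis
    unfolding sh T_def[symmetric] h_def[symmetric] U_def[symmetric]
    using nlm_comp[OF S0, of s U] nlm_comp[OF S0', of s "U \<circ>\<^sub>p [:S, 1:]"] UU by auto
qed


lemma smult_sum_right: "smult c (sum f A) = (\<Sum>x\<in>A. smult c (f x))"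
  by (induction A rule: infinite_finite_induct) (simp_all add: smult_add_right)

lemma prod_lin_dvd:
  fixes \<alpha> :: "nat \<Rightarrow> 'a::field"
  shows "inj_on \<alpha> {..<n} \<Longrightarrow> (\<forall>i<n. [:-\<alpha> i, 1:] ^ m dvd c) \<Longrightarrow> (\<Prod>i<n. [:-\<alpha> i, 1:] ^ m) dvd c"
proof (induction n)
  case 0 then show ?case by simp
next
  case (Suc n)
  have inj: "inj_on \<alpha> {..<n}" using Suc.prems(1) by (rule inj_on_subset) auto
  define P where "P = (\<Prod>i<n. [:-\<alpha> i, 1:] ^ m)"
  have "P dvd c" using Suc.IH[OF inj] Suc.prems(2) by (simp add: P_def)
  then obtain d where cd: "c = P * d" by (elim dvdE)
  have dn: "[:-\<alpha> n, 1:] ^ m dvd c" using Suc.prems(2) by simp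
  have "[:-\<alpha> n, 1:] ^ m dvd d"
  proof (cases "d = 0")
    case True then show ?thesis by simp
  next
    case False
    have Pn: "poly P (\<alpha> n) \<noteq> 0"
      unfolding P_def poly_prod
    proof (subst prod_zero_iff, simp, safe)
      fix i assume "i < n" "poly ([:- \<alpha> i, 1:] ^ m) (\<alpha> n) = 0"
      then have "\<alpha> n = \<alpha> i" by (simp add: poly_power)
      with Suc.prems(1) \<open>i < n\<close> show False by (auto dest: inj_onD)
    qed
    then have P0: "P \<noteq> 0" by auto
    have "order (\<alpha> n) P = 0" using Pn order_root by blast
    then have "order (\<alpha> n) c = order (\<alpha> n) d"
      using cd P0 False by (simp add: order_mult)
    moreover have "m \<le> order (\<alpha> n) c" using dn cd P0 False by (simp add: order_divides)
    ultimately show ?thesis by (simp add: order_divides)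
  qed
  then have "P * [:-\<alpha> n, 1:] ^ m dvd c" using cd by simp
  then show ?case by (simp add: P_def)
qed

definition spn :: "nat \<Rightarrow> (nat \<Rightarrow> 'a::comm_ring_1 poly poly) \<Rightarrow> 'a poly poly set" where
  "spn l P = {(\<Sum>t\<le>l. smult (a t) (P t)) | a. True}"

lemma spn_zero: "0 \<in> spn l P"
  unfolding spn_def by (rule CollectI, rule exI[of _ "\<lambda>_. 0"]) simp

lemma spn_add: "x \<in> spn l P \<Longrightarrow> y \<in> spn l P \<Longrightarrow> x + y \<in> spn l P"
  unfolding spn_def
  apply clarify
  subgoal for a b
    by (intro exI[of _ "\<lambda>t. a t + b t"] conjI) (simp add: smult_add_left sum.distrib)
  done

lemma spn_smult: "x \<in> spn l P \<Longrightarrow> smult c x \<in> spn l P"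
  unfolding spn_def
  apply clarify
  subgoal for a
    by (intro exI[of _ "\<lambda>t. c * a t"] conjI) (simp add: smult_sum_right)
  done

lemma spn_gen: "t \<le> l \<Longrightarrow> P t \<in> spn l P"
  unfolding spn_def
proof (rule CollectI, rule exI[of _ "\<lambda>u. if u = t then 1 else 0"], rule conjI)
  assume "t \<le> l"
  have "(\<Sum>u\<le>l. smult (if u = t then 1 else 0) (P u)) = (\<Sum>u\<le>l. if u = t then P u else 0)"
    by (intro sum.cong) auto
  also have "\<dots> = P t" using \<open>t \<le> l\<close> by (simp add: sum.delta)
  finally show "P t = (\<Sum>u\<le>l. smult (if u = t then 1 else 0) (P u))" by simp
qed simp

lemma spn_sum: "(\<And>x. x \<in> A \<Longrightarrow> f x \<in> spn l P) \<Longrightarrow> sum f A \<in> spn l P"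
  by (induction A rule: infinite_finite_induct) (auto simp: spn_zero spn_add)



theorem theorem5:
  fixes alpha w r :: "nat \<Rightarrow> 'a::{finite,field}"
    and k n s l :: nat
    and R :: "'a poly"
  assumes "1 \<le> k" "k < n" "n < card (UNIV :: 'a set)"
    and "inj_on alpha {..<n}" "\<forall>i<n. alpha i \<noteq> 0"
    and "\<forall>i<n. w i \<noteq> 0"
    and "\<forall>i<k. r i = 0"
    and "degree R < n" "\<forall>i<n. poly R (alpha i) = r i / w i"
    and "1 \<le> s" "s \<le> l"
  shows
    "let G = (\<Prod>i<n. [:- alpha i, 1:]);
         L = (\<Prod>i<k. [:- alpha i, 1:]);
         Gb = G div L; Rb = R div L;
         Pb = (\<lambda>t. if t < s then [:Gb ^ (s - t):] * [:- Rb, 1:] ^ t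
                   else [:0, L:] ^ (t - s) * [:- Rb, 1:] ^ s)
     in phi s L ` Mmod s l n alpha (\<lambda>i. r i / w i)
          = {(\<Sum>t\<le>l. smult (a t) (Pb t)) | a. True}"
proof -
  define G where "G = (\<Prod>i<n. [:- alpha i, 1:])"
  define L where "L = (\<Prod>i<k. [:- alpha i, 1:])"
  define Gb where "Gb = G div L"
  define Rb where "Rb = R div L"
  define Pb where "Pb = (\<lambda>t. if t < s then [:Gb ^ (s - t):] * [:- Rb, 1:] ^ t
                   else [:0, L:] ^ (t - s) * [:- Rb, 1:] ^ s)"
  define Y1 where "Y1 = [:-R, 1:]"
  define Y :: "'a poly poly" where "Y = [:0, 1:]"
  define Pt where "Pt = (\<lambda>t. if t < s then smult (G ^ (s - t)) (Y1 ^ t) else Y ^ (t - s) * Y1 ^ s)"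
  define r' where "r' = (\<lambda>i. r i / w i)"
  define M where "M = Mmod s l n alpha r'"
  have L0: "L \<noteq> 0" unfolding L_def by (simp add: prod_zero_iff)
  have LG: "G = L * Gb"
    unfolding Gb_def
    by (rule dvd_mult_div_cancel[symmetric], unfold G_def L_def, rule prod_dvd_prod_subset)
       (use assms(2) in auto)
  have LR: "R = L * Rb"
  proof -
    have "(\<Prod>i<k. [:- alpha i, 1:] ^ 1) dvd R"
    proof (rule prod_lin_dvd)
      show "inj_on alpha {..<k}" by (rule inj_on_subset[OF assms(4)]) (use assms(2) in auto)
      show "\<forall>i<k. [:- alpha i, 1:] ^ 1 dvd R"
        using assms(2,7,9) by (auto simp: poly_eq_0_iff_dvd[symmetric])
    qed
    then have "L dvd R" by (simp add: L_def)
    then show ?thesis unfolding Rb_def by simp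
  qed
  have Gdvd: "\<forall>i<n. [:- alpha i, 1:] ^ 1 dvd G"
    unfolding G_def by auto
  have Y1L: "Y1 \<circ>\<^sub>p [:0, L:] = smult L [:- Rb, 1:]"
    unfolding Y1_def by (simp add: pcompose_pCons LR)
  have PtL: "Pt t \<circ>\<^sub>p [:0, L:] = smult (L ^ s) (Pb t)" for t
  proof (cases "t < s")
    case True
    have "G ^ (s - t) * L ^ t = L ^ s * Gb ^ (s - t)"
      using True by (simp add: LG power_mult_distrib power_add[symmetric] algebra_simps)
    have "Pt t \<circ>\<^sub>p [:0, L:] = smult (G ^ (s - t)) ((smult L [:- Rb, 1:]) ^ t)"
      using True by (simp only: Pt_def if_True pcompose_smult pcompose_power Y1L)
    also have "\<dots> = smult (G ^ (s - t) * L ^ t) ([:- Rb, 1:] ^ t)"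
      by (simp only: smult_power smult_smult)
    finally show ?thesis using True \<open>G ^ (s - t) * L ^ t = _\<close>
      by (simp add: Pb_def)
  next
    case False
    have "Y \<circ>\<^sub>p [:0, L:] = [:0, L:]" unfolding Y_def by (simp add: pcompose_pCons)
    then have "Pt t \<circ>\<^sub>p [:0, L:] = [:0, L:] ^ (t - s) * (smult L [:- Rb, 1:]) ^ s"
      using False by (simp only: Pt_def if_False pcompose_mult pcompose_power Y1L)
    also have "\<dots> = smult (L ^ s) ([:0, L:] ^ (t - s) * [:- Rb, 1:] ^ s)"
      by (simp only: smult_power mult_smult_right)
    finally show ?thesis using False
      by (simp add: Pb_def)
  qed
  have phi_comb: "phi s L (\<Sum>t\<le>l. smult (a t) (Pt t)) = (\<Sum>t\<le>l. smult (a t) (Pb t))" for a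
  proof -
    have "(\<Sum>t\<le>l. smult (a t) (Pt t)) \<circ>\<^sub>p [:0, L:] = smult (L ^ s) (\<Sum>t\<le>l. smult (a t) (Pb t))"
      by (simp add: pcompose_sum pcompose_smult PtL smult_sum_right mult.commute)
    moreover have "map_poly (\<lambda>c. c div L ^ s) (smult (L ^ s) X) = X" for X
      by (intro poly_eqI) (simp add: coeff_map_poly L0)
    ultimately show ?thesis by (simp add: phi_def)
  qed
  have nlmY: "nlm 1 Y" unfolding Y_def by (rule nlm_lin) simp
  have degPt: "degree (Pt t) \<le> t" for t
  proof (cases "t < s")
    case True
    then show ?thesis unfolding Pt_def Y1_def
      using degree_smult_le[of "G ^ (s - t)" "[:-R, 1:] ^ t"] by (simp add: degree_linear_power)
  next
    case False
    have "degree (Y ^ (t - s) * Y1 ^ s) \<le> degree (Y ^ (t - s)) + degree (Y1 ^ s)"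
      by (rule degree_mult_le)
    also have "\<dots> = t" unfolding Y_def Y1_def using False
      by (simp only: degree_linear_power)
    finally show ?thesis using False unfolding Pt_def by simp
  qed
  have comb_in: "(\<Sum>t\<le>l. smult (a t) (Pt t)) \<in> M" for a
  proof -
    let ?Q = "(\<Sum>t\<le>l. smult (a t) (Pt t))"
    have "degree ?Q \<le> l"
    proof (rule degree_sum_le)
      fix t assume "t \<in> {..l}"
      then show "degree (smult (a t) (Pt t)) \<le> l"
        using degree_smult_le[of "a t" "Pt t"] degPt[of t] by simp
    qed simp
    moreover have "nlm s (shiftXY ?Q (alpha i) (r' i))" if i: "i < n" for i
    proof -
      define h where "h = (\<lambda>c::'a poly. c \<circ>\<^sub>p [:alpha i, 1:])"
      have hh: "rhom h" unfolding h_def by (rule rhom_pcomp)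
      have h0: "h 0 = 0" using hh by (simp add: rhom_def)
      have h1: "h 1 = 1" using hh by (simp add: rhom_def)
      have hpow: "h (x ^ m) = h x ^ m" for x m unfolding h_def by (rule pcompose_power)
      have hY: "map_poly h Y = Y" unfolding Y_def by (simp add: map_poly_pCons h0 h1)
      have Y1R: "Y1 \<circ>\<^sub>p [:R, 1:] = Y" unfolding Y1_def Y_def by (simp add: pcompose_pCons)
      have YR: "Y \<circ>\<^sub>p [:R, 1:] = [:R, 1:]" unfolding Y_def by (simp add: pcompose_pCons)
      have hG: "monom 1 1 dvd h G"
        unfolding h_def using Gdvd i by (simp only: lin_shift_dvd)
      have each: "nlm s (map_poly h (Pt t \<circ>\<^sub>p [:R, 1:]))" for t
      proof (cases "t < s")
        case True
        then have "map_poly h (Pt t \<circ>\<^sub>p [:R, 1:]) = [:h G ^ (s - t):] * Y ^ t"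
          by (simp add: Pt_def pcompose_smult pcompose_power Y1R map_poly_smult_h[OF hh]
              map_poly_power_h[OF hh] hY hpow)
        moreover have "nlm (s - t) [:h G ^ (s - t):]"
        proof (rule nlm_const)
          have "monom 1 1 ^ (s - t) dvd h G ^ (s - t)" using hG by (rule dvd_power_same)
          then show "monom 1 (s - t) dvd h G ^ (s - t)" by (simp add: monom_power)
        qed
        moreover have "nlm (1 * t) (Y ^ t)" by (rule nlm_power[OF nlmY])
        ultimately show ?thesis using nlm_mult[of "s - t" _ t] True by fastforce
      next
        case False
        then have "map_poly h (Pt t \<circ>\<^sub>p [:R, 1:]) = map_poly h [:R, 1:] ^ (t - s) * Y ^ s"
          by (simp add: Pt_def pcompose_mult pcompose_power Y1R YR map_poly_mult_h[OF hh]
              map_poly_power_h[OF hh] hY)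
        moreover have "nlm (0 + 1 * s) (map_poly h [:R, 1:] ^ (t - s) * Y ^ s)"
          by (rule nlm_mult[OF nlm_0 nlm_power[OF nlmY]])
        ultimately show ?thesis by simp
      qed
      have "map_poly h (?Q \<circ>\<^sub>p [:R, 1:]) =
          (\<Sum>t\<le>l. smult (h (a t)) (map_poly h (Pt t \<circ>\<^sub>p [:R, 1:])))"
        by (simp add: pcompose_sum pcompose_smult map_poly_sum_h[OF hh] map_poly_smult_h[OF hh])
      then have "nlm s (map_poly h (?Q \<circ>\<^sub>p [:R, 1:]))"
        by (auto intro!: nlm_sum nlm_smult each)
      moreover have "poly R (alpha i) = r' i" using assms(9) i by (simp add: r'_def)
      ultimately show ?thesis using shift_equiv unfolding h_def by blast
    qed
    ultimately show ?thesis unfolding M_def Mmod_def by blast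
  qed
  have spanned: "Q \<in> spn l Pt" if QM: "Q \<in> M" for Q
  proof -
    define T where "T = Q \<circ>\<^sub>p [:R, 1:]"
    have degT: "degree T \<le> l"
      using QM by (simp add: T_def degree_pcompose M_def Mmod_def)
    have QT: "Q = T \<circ>\<^sub>p Y1"
      unfolding T_def Y1_def by (simp add: pcompose_assoc[symmetric] pcompose_pCons)
    have cdvd: "G ^ (s - j) dvd coeff T j" if j: "j < s" for j
    proof -
      have "\<forall>i<n. [:- alpha i, 1:] ^ (s - j) dvd coeff T j"
      proof (intro allI impI)
        fix i assume i: "i < n"
        define h where "h = (\<lambda>c::'a poly. c \<circ>\<^sub>p [:alpha i, 1:])"
        have "nlm s (shiftXY Q (alpha i) (r' i))" using QM i by (simp add: M_def Mmod_def)
        moreover have "poly R (alpha i) = r' i" using assms(9) i by (simp add: r'_def)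
        ultimately have "nlm s (map_poly h T)" using shift_equiv unfolding h_def T_def by blast
        from nlm_coeff[OF this j] have "monom 1 (s - j) dvd h (coeff T j)"
          by (simp add: coeff_map_poly h_def)
        then show "[:- alpha i, 1:] ^ (s - j) dvd coeff T j"
          unfolding h_def by (simp only: lin_shift_dvd)
      qed
      from prod_lin_dvd[OF assms(4) this] show ?thesis
        by (simp add: G_def prod_power_distrib)
    qed
    have term_in: "smult (coeff T j) (Y1 ^ j) \<in> spn l Pt" if jl: "j \<le> l" for j
    proof (cases "j < s")
      case True
      then obtain b where b: "coeff T j = G ^ (s - j) * b" using cdvd by (meson dvdE)
      have "smult (coeff T j) (Y1 ^ j) = smult b (Pt j)"
        using True by (simp add: b Pt_def mult.commute)
      then show ?thesis using spn_smult[OF spn_gen[OF jl]] by simp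
    next
      case False
      define e where "e = (\<lambda>m. coeff (Y1 ^ (j - s)) m)"
      have "Y1 ^ (j - s) = (\<Sum>m\<le>j - s. monom (e m) m)"
        using poly_as_sum_of_monoms[of "Y1 ^ (j - s)"]
        by (simp add: e_def Y1_def degree_linear_power)
      then have "Y1 ^ (j - s) = (\<Sum>m\<le>j - s. smult (e m) (Y ^ m))"
        by (simp add: monom_altdef Y_def)
      moreover have "Y1 ^ j = Y1 ^ (j - s) * Y1 ^ s"
        using False by (simp add: power_add[symmetric])
      ultimately have "Y1 ^ j = (\<Sum>m\<le>j - s. smult (e m) (Y ^ m * Y1 ^ s))"
        by (simp add: sum_distrib_right)
      moreover have "(\<Sum>m\<le>j - s. smult (e m) (Y ^ m * Y1 ^ s)) \<in> spn l Pt"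
      proof (rule spn_sum)
        fix m assume "m \<in> {..j - s}"
        then have sm: "s + m \<le> l" using jl False by auto
        have "Pt (s + m) = Y ^ m * Y1 ^ s" by (simp add: Pt_def)
        then show "smult (e m) (Y ^ m * Y1 ^ s) \<in> spn l Pt"
          using spn_smult[OF spn_gen[OF sm, of Pt], of "e m"] by simp
      qed
      ultimately have "Y1 ^ j \<in> spn l Pt" by simp
      then show ?thesis by (rule spn_smult)
    qed
    show ?thesis
      unfolding QT pcompose_as_sum
    proof (rule spn_sum)
      fix j assume "j \<in> {..degree T}"
      then have "j \<le> l" using degT by simp
      then show "smult (coeff T j) (Y1 ^ j) \<in> spn l Pt" by (rule term_in)
    qed
  qed
  have "phi s L ` M = {(\<Sum>t\<le>l. smult (a t) (Pb t)) | a. True}"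
  proof safe
    fix Q assume "Q \<in> M"
    then have "Q \<in> spn l Pt" by (rule spanned)
    then obtain a where "Q = (\<Sum>t\<le>l. smult (a t) (Pt t))"
      unfolding spn_def by blast
    then have "phi s L Q = (\<Sum>t\<le>l. smult (a t) (Pb t))" by (simp only: phi_comb)
    then show "\<exists>a. phi s L Q = (\<Sum>t\<le>l. smult (a t) (Pb t)) \<and> True"
      by blast
  next
    fix a
    show "(\<Sum>t\<le>l. smult (a t) (Pb t)) \<in> phi s L ` M"
    proof (rule image_eqI)
      show "(\<Sum>t\<le>l. smult (a t) (Pb t)) = phi s L (\<Sum>t\<le>l. smult (a t) (Pt t))"
        by (rule phi_comb[symmetric])
      show "(\<Sum>t\<le>l. smult (a t) (Pt t)) \<in> M" by (rule comb_in)
    qed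
  qed
  then show ?thesis
    unfolding Let_def G_def L_def Gb_def Rb_def Pb_def M_def r'_def .
qed

end
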